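(* Let $n\ge3$ and $\mathcal{A}\in\mathcal{R}_n$. Then $\operatorname{Ann}\mathcal{A}=\langle e_n\rangle$, and the automorphisms of $\mathcal{A}$ are exactly the linear maps $e_1\mapsto e_1+xe_n$, $e_i\mapsto e_i$ ($2\le i\le n$), with $x\in\mathbb{C}$.
   Context: Over $\mathbb{C}$, with basis $e_1,\dots,e_n$ and $e_ie_j=\sum_kc_{ij}^ke_k$. Condition ( * ): $c_{ij}^k=0$ whenever $k\le\max\{i,j\}$. For $n\ge3$, $\mathcal{R}_n$ is the family of algebra structures satisfying ( * ) with $e_i^2=e_{i+1}$ for $1\le i\le n-1$, $c_{21}^3=1$, $c_{1i}^{i+1}=0$ for $2\le i\le n-1$, and remaining structure constants $c_{ij}^k$ ($i\ne j$, $k>\max\{i,j\}$) arbitrary. $\operatorname{Ann}\mathcal{A}=\{a: a\mathcal{A}+\mathcal{A}a=0\}$. *)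

theory Defs
  imports Complex_Main
begin

text \<open>An n-dimensional algebra over the complex numbers with basis e_1,...,e_n is given by
  structure constants c i j k (meaning e_i e_j = sum_k c i j k e_k), indices in {1..n}.
  Elements are coordinate vectors a :: nat => complex vanishing outside {1..n}.\<close>

type_synonym sconst = "nat \<Rightarrow> nat \<Rightarrow> nat \<Rightarrow> complex"

definition vecs :: "nat \<Rightarrow> (nat \<Rightarrow> complex) set" where
  "vecs n = {a. \<forall>i. i \<notin> {1..n} \<longrightarrow> a i = 0}"

definition basis_vec :: "nat \<Rightarrow> nat \<Rightarrow> complex" where
  "basis_vec m = (\<lambda>i. if i = m then 1 else 0)"

definition amult :: "nat \<Rightarrow> sconst \<Rightarrow> (nat \<Rightarrow> complex) \<Rightarrow> (nat \<Rightarrow> complex) \<Rightarrow> (nat \<Rightarrow> complex)" where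
  "amult n c a b = (\<lambda>k. if k \<in> {1..n}
      then (\<Sum>i=1..n. \<Sum>j=1..n. a i * b j * c i j k) else 0)"

definition in_R :: "nat \<Rightarrow> sconst \<Rightarrow> bool" where
  "in_R n c \<longleftrightarrow>
     (\<forall>i\<in>{1..n}. \<forall>j\<in>{1..n}. \<forall>k\<in>{1..n}. k \<le> max i j \<longrightarrow> c i j k = 0)
   \<and> (\<forall>i\<in>{1..n-1}. \<forall>k\<in>{1..n}. c i i k = (if k = i + 1 then 1 else 0))
   \<and> c 2 1 3 = 1
   \<and> (\<forall>i\<in>{2..n-1}. c 1 i (i + 1) = 0)"

definition annihilator :: "nat \<Rightarrow> sconst \<Rightarrow> (nat \<Rightarrow> complex) set" where
  "annihilator n c = {a \<in> vecs n. \<forall>b\<in>vecs n. amult n c a b = (\<lambda>_. 0) \<and> amult n c b a = (\<lambda>_. 0)}"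

definition is_automorphism :: "nat \<Rightarrow> sconst \<Rightarrow> ((nat \<Rightarrow> complex) \<Rightarrow> (nat \<Rightarrow> complex)) \<Rightarrow> bool" where
  "is_automorphism n c f \<longleftrightarrow>
     bij_betw f (vecs n) (vecs n)
   \<and> (\<forall>a\<in>vecs n. \<forall>b\<in>vecs n. f (\<lambda>k. a k + b k) = (\<lambda>k. f a k + f b k))
   \<and> (\<forall>a\<in>vecs n. \<forall>t. f (\<lambda>k. t * a k) = (\<lambda>k. t * f a k))
   \<and> (\<forall>a\<in>vecs n. \<forall>b\<in>vecs n. f (amult n c a b) = amult n c (f a) (f b))"

end

theory Submission
  imports Defs
begin

lemma inR_zero: "in_R n c \<Longrightarrow> i \<in> {1..n} \<Longrightarrow> j \<in> {1..n} \<Longrightarrow> k \<in> {1..n} \<Longrightarrow> k \<le> max i j \<Longrightarrow> c i j k = 0"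
  unfolding in_R_def by blast

lemma inR_sq: "in_R n c \<Longrightarrow> 1 \<le> i \<Longrightarrow> i < n \<Longrightarrow> c i i (Suc i) = 1"
  unfolding in_R_def by auto

lemma inR_sq0: "in_R n c \<Longrightarrow> 1 \<le> i \<Longrightarrow> i < n \<Longrightarrow> k \<in> {1..n} \<Longrightarrow> k \<noteq> Suc i \<Longrightarrow> c i i k = 0"
  unfolding in_R_def by auto

lemma inR_21: "in_R n c \<Longrightarrow> c 2 1 3 = 1"
  unfolding in_R_def by auto

lemma inR_1i: "in_R n c \<Longrightarrow> 2 \<le> i \<Longrightarrow> i < n \<Longrightarrow> c 1 i (Suc i) = 0"
  unfolding in_R_def by auto

lemma sum_single:
  assumes "finite A" "x \<in> A" "\<forall>y\<in>A. y \<noteq> x \<longrightarrow> g y = 0"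
  shows "sum g A = g x"
proof -
  have "sum g A = g x + sum g (A - {x})" using assms by (simp add: sum.remove)
  also have "sum g (A - {x}) = 0" using assms(3) by (intro sum.neutral) auto
  finally show ?thesis by simp
qed

lemma amult_restrict:
  assumes k: "k \<in> {1..n}" and S: "S \<subseteq> {1..n} \<times> {1..n}"
    and z: "\<And>i j. i \<in> {1..n} \<Longrightarrow> j \<in> {1..n} \<Longrightarrow> (i,j) \<notin> S \<Longrightarrow> a i * b j * c i j k = 0"
  shows "amult n c a b k = (\<Sum>(i,j)\<in>S. a i * b j * c i j k)"
proof -
  have "amult n c a b k = (\<Sum>i=1..n. \<Sum>j=1..n. a i * b j * c i j k)" using k by (simp add: amult_def)
  also have "\<dots> = (\<Sum>(i,j)\<in>{1..n}\<times>{1..n}. a i * b j * c i j k)" by (simp add: sum.cartesian_product)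
  also have "\<dots> = (\<Sum>(i,j)\<in>S. a i * b j * c i j k)"
    by (rule sum.mono_neutral_right) (use S z in auto)
  finally show ?thesis .
qed

lemma amult_low:
  assumes R: "in_R n c" and a: "\<forall>i<p. a i = 0" and b: "\<forall>j<q. b j = 0" and kk: "k \<le> max p q"
  shows "amult n c a b k = 0"
proof (cases "k \<in> {1..n}")
  case False thus ?thesis by (auto simp: amult_def)
next
  case True
  have "amult n c a b k = (\<Sum>(i,j)\<in>{}. a i * b j * c i j k)"
  proof (rule amult_restrict[OF True])
    fix i j assume i: "i \<in> {1..n}" and j: "j \<in> {1..n}"
    show "a i * b j * c i j k = 0"
    proof (cases "i < p \<or> j < q")
      case True thus ?thesis using a b by auto
    next
      case False
      hence "k \<le> max i j" using kk by (auto simp: max_def split: if_splits)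
      thus ?thesis using inR_zero[OF R i j \<open>k\<in>_\<close>] by auto
    qed
  qed auto
  thus ?thesis by simp
qed

lemma amult_cong_n:
  assumes R: "in_R n c" and A: "\<forall>i<n. a i = a' i" and B: "\<forall>j<n. b j = b' j"
  shows "amult n c a b = amult n c a' b'"
proof (rule ext)
  fix k
  show "amult n c a b k = amult n c a' b' k"
  proof (cases "k \<in> {1..n}")
    case False thus ?thesis by (auto simp: amult_def)
  next
    case True
    have "\<And>i j. i \<in> {1..n} \<Longrightarrow> j \<in> {1..n} \<Longrightarrow> a i * b j * c i j k = a' i * b' j * c i j k"
    proof -
      fix i j assume i: "i \<in> {1..n}" and j: "j \<in> {1..n}"
      show "a i * b j * c i j k = a' i * b' j * c i j k"
      proof (cases "i < n \<and> j < n")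
        case True thus ?thesis using A B by auto
      next
        case False
        hence "k \<le> max i j" using True i j by auto
        thus ?thesis using inR_zero[OF R i j \<open>k\<in>_\<close>] by simp
      qed
    qed
    thus ?thesis unfolding amult_def using True by (auto intro!: sum.cong)
  qed
qed

lemma basis_in: "m \<in> {1..n} \<Longrightarrow> basis_vec m \<in> vecs n"
  by (auto simp: vecs_def basis_vec_def)

lemma vec_decomp: "a \<in> vecs n \<Longrightarrow> a = (\<lambda>k. \<Sum>i=1..n. a i * basis_vec i k)"
proof (rule ext)
  fix k assume a: "a \<in> vecs n"
  have "(\<Sum>i=1..n. a i * basis_vec i k) = (\<Sum>i=1..n. if i = k then a k else 0)"
    by (rule sum.cong) (auto simp: basis_vec_def)
  also have "\<dots> = a k" using a by (auto simp: vecs_def)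
  finally show "a k = (\<Sum>i=1..n. a i * basis_vec i k)" by simp
qed

lemma amult_basis:
  assumes i: "i \<in> {1..n}" and j: "j \<in> {1..n}"
  shows "amult n c (basis_vec i) (basis_vec j) = (\<lambda>k. if k \<in> {1..n} then c i j k else 0)"
proof (rule ext)
  fix k show "amult n c (basis_vec i) (basis_vec j) k = (if k \<in> {1..n} then c i j k else 0)"
  proof (cases "k \<in> {1..n}")
    case False thus ?thesis by (auto simp: amult_def)
  next
    case True
    have "amult n c (basis_vec i) (basis_vec j) k = (\<Sum>(i',j')\<in>{(i,j)}. basis_vec i i' * basis_vec j j' * c i' j' k)"
      by (rule amult_restrict[OF True]) (use i j in \<open>auto simp: basis_vec_def\<close>)
    thus ?thesis using True by (simp add: basis_vec_def)
  qed
qed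

lemma sq_basis:
  assumes R: "in_R n c" and "1 \<le> i" "i < n"
  shows "amult n c (basis_vec i) (basis_vec i) = basis_vec (Suc i)"
  using assms amult_basis[of i n i c] inR_sq[OF R] inR_sq0[OF R]
  by (auto simp: basis_vec_def)

lemma lhs_single:
  assumes R: "in_R n c" and i: "i \<in> {1..n}" and j: "j \<in> {1..n}" and k: "k = Suc (max i j)" "k \<le> n"
    and U: "\<And>l k. k < l \<Longrightarrow> l \<in> {1..n} \<Longrightarrow> U l k = (0::complex)"
  shows "(\<Sum>l=1..n. c i j l * U l k) = c i j k * U k k"
proof (rule sum_single)
  show "\<forall>l\<in>{1..n}. l \<noteq> k \<longrightarrow> c i j l * U l k = 0"
  proof (intro ballI impI)
    fix l assume l: "l \<in> {1..n}" "l \<noteq> k"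
    show "c i j l * U l k = 0"
    proof (cases "l < k")
      case True hence "l \<le> max i j" using k by auto
      thus ?thesis using inR_zero[OF R i j l(1)] by simp
    next
      case False hence "k < l" using l by auto
      thus ?thesis using U l by simp
    qed
  qed
qed (use k in auto)

lemma auto_forward:
  assumes n3: "n \<ge> 3" and R: "in_R n c" and f: "is_automorphism n c f"
  shows "\<exists>x. \<forall>a\<in>vecs n. f a = (\<lambda>k. a k + x * a 1 * basis_vec n k)"
proof -
  have bij: "bij_betw f (vecs n) (vecs n)" using f unfolding is_automorphism_def by (elim conjE)
  have fv: "\<And>a. a \<in> vecs n \<Longrightarrow> f a \<in> vecs n" by (rule bij_betw_apply[OF bij])
  have fadd: "\<And>a b. a \<in> vecs n \<Longrightarrow> b \<in> vecs n \<Longrightarrow> f (\<lambda>k. a k + b k) = (\<lambda>k. f a k + f b k)"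
    using f by (simp add: is_automorphism_def)
  have fsc: "\<And>a t. a \<in> vecs n \<Longrightarrow> f (\<lambda>k. t * a k) = (\<lambda>k. t * f a k)"
    using f by (simp add: is_automorphism_def)
  have fmul: "\<And>a b. a \<in> vecs n \<Longrightarrow> b \<in> vecs n \<Longrightarrow> f (amult n c a b) = amult n c (f a) (f b)"
    using f by (simp add: is_automorphism_def)
  have z: "(\<lambda>_. 0::complex) \<in> vecs n" by (simp add: vecs_def)
  have f0: "f (\<lambda>_. 0) = (\<lambda>_. 0)" using fsc[OF z, of 0] by simp
  define U where "U i = f (basis_vec i)" for i
  have psum: "(\<lambda>k. \<Sum>i=1..m. a i * basis_vec i k) \<in> vecs n" if "m \<le> n" for a m
    using that by (auto simp: vecs_def basis_vec_def)
  have lin: "f (\<lambda>k. \<Sum>i=1..m. a i * basis_vec i k) = (\<lambda>k. \<Sum>i=1..m. a i * U i k)" if "m \<le> n" for a m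
    using that
  proof (induction m)
    case 0 thus ?case using f0 by simp
  next
    case (Suc m)
    have b: "basis_vec (Suc m) \<in> vecs n" using Suc.prems by (intro basis_in) auto
    have e: "(\<lambda>k. \<Sum>i=1..Suc m. a i * basis_vec i k)
        = (\<lambda>k. (\<lambda>k. \<Sum>i=1..m. a i * basis_vec i k) k + (\<lambda>k. a (Suc m) * basis_vec (Suc m) k) k)"
      by simp
    have "f (\<lambda>k. \<Sum>i=1..Suc m. a i * basis_vec i k)
        = (\<lambda>k. f (\<lambda>k. \<Sum>i=1..m. a i * basis_vec i k) k + f (\<lambda>k. a (Suc m) * basis_vec (Suc m) k) k)"
      unfolding e by (rule fadd) (use psum Suc.prems b vecs_def in auto)
    also have "\<dots> = (\<lambda>k. \<Sum>i=1..Suc m. a i * U i k)"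
      using Suc fsc[OF b] by (simp add: U_def)
    finally show ?case .
  qed
  have dec: "f a = (\<lambda>k. \<Sum>i=1..n. a i * U i k)" if "a \<in> vecs n" for a
    using lin[of n a] vec_decomp[OF that] by simp
  have Uv: "U i \<in> vecs n" if "i \<in> {1..n}" for i
    unfolding U_def using fv basis_in that by blast
  have UB: "U (Suc i) = amult n c (U i) (U i)" if "1 \<le> i" "i < n" for i
    unfolding U_def using fmul[of "basis_vec i" "basis_vec i"] sq_basis[OF R that] basis_in[of i n] that
    by auto
  have UD: "(\<Sum>l=1..n. c i j l * U l k) = amult n c (U i) (U j) k"
    if i: "i \<in> {1..n}" and j: "j \<in> {1..n}" and k: "k \<in> {1..n}" for i j k
  proof -
    have "amult n c (U i) (U j) = f (amult n c (basis_vec i) (basis_vec j))"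
      unfolding U_def using fmul basis_in i j by auto
    also have "\<dots> = (\<lambda>k. \<Sum>l=1..n. (if l \<in> {1..n} then c i j l else 0) * U l k)"
      unfolding amult_basis[OF i j] by (rule dec) (auto simp: vecs_def)
    finally show ?thesis by simp
  qed
  define a where "a = U 1 1"
  have C1: "(\<forall>k<i. U i k = 0) \<and> U i i = a ^ (2 ^ (i - 1))" if "1 \<le> i" "i \<le> n" for i
    using that
  proof (induction i)
    case 0 thus ?case by simp
  next
    case (Suc i)
    show ?case
    proof (cases "i = 0")
      case True thus ?thesis using Uv[of 1] Suc.prems by (auto simp: a_def vecs_def)
    next
      case False
      hence i1: "1 \<le> i" "i < n" using Suc.prems by auto
      have IH: "\<forall>k<i. U i k = 0" "U i i = a ^ (2 ^ (i - 1))" using Suc.IH i1 by auto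
      have low: "\<forall>k<Suc i. U (Suc i) k = 0"
        using amult_low[OF R IH(1) IH(1)] UB[OF i1] by auto
      have "U (Suc i) (Suc i) = (\<Sum>(i',j')\<in>{(i,i)}. U i i' * U i j' * c i' j' (Suc i))"
        unfolding UB[OF i1]
      proof (rule amult_restrict)
        fix i' j' assume a1: "i' \<in> {1..n}" "j' \<in> {1..n}" "(i', j') \<notin> {(i, i)}"
        show "U i i' * U i j' * c i' j' (Suc i) = 0"
        proof (cases "i' < i \<or> j' < i")
          case True thus ?thesis using IH by auto
        next
          case False
          hence "Suc i \<le> max i' j'" using a1 by auto
          thus ?thesis using inR_zero[OF R a1(1,2), of "Suc i"] i1 by auto
        qed
      qed (use i1 in auto)
      also have "\<dots> = a ^ (2 ^ (i - 1)) * a ^ (2 ^ (i - 1))" using IH inR_sq[OF R i1] by simp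
      also have "\<dots> = a ^ (2 ^ (Suc i - 1))"
      proof -
        have "(2::nat) ^ (Suc i - 1) = 2 ^ (i - 1) + 2 ^ (i - 1)" using i1
          by (cases i) auto
        thus ?thesis by (simp add: power_add)
      qed
      finally show ?thesis using low by simp
    qed
  qed
  have a0: "a \<noteq> 0"
  proof
    assume "a = 0"
    hence "U n n = 0" using C1[of n] n3 by simp
    hence "U n = (\<lambda>_. 0)"
    proof -
      assume h: "U n n = 0"
      show ?thesis
      proof
        fix k show "U n k = 0"
          using h C1[of n] n3 Uv[of n] by (cases "k < n"; cases "k = n") (auto simp: vecs_def)
      qed
    qed
    hence "f (basis_vec n) = f (\<lambda>_. 0)" using f0 by (simp add: U_def)
    hence "basis_vec n = (\<lambda>_. 0)" using bij basis_in[of n n] z n3 by (auto simp: bij_betw_def inj_on_def)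
    thus False by (metis basis_vec_def one_neq_zero)
  qed
  have c123: "c 1 2 3 = 0" using inR_1i[OF R, of 2] n3 by (simp add: numeral_3_eq_3)
  have c223: "c 2 2 3 = 1" using inR_sq[OF R, of 2] n3 by (simp add: numeral_3_eq_3)
  have c213: "c 2 1 3 = 1" using inR_21[OF R] .
  have U22: "U 2 2 = a^2" using C1[of 2] n3 by simp
  have U33: "U 3 3 = a^4" using C1[of 3] n3 by simp
  have U21: "U 2 1 = 0" using C1[of 2] n3 by simp
  have Ulk: "U l k = 0" if "k < l" "l \<in> {1..n}" for l k using C1[of l] that by auto
  have U12: "U 1 2 = 0"
  proof -
    have "(\<Sum>l=1..n. c 1 2 l * U l 3) = c 1 2 3 * U 3 3"
      by (rule lhs_single[OF R]) (use n3 Ulk in auto)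
    also have "\<dots> = 0" using c123 by simp
    finally have L: "(\<Sum>l=1..n. c 1 2 l * U l 3) = 0" .
    have "amult n c (U 1) (U 2) 3 = (\<Sum>(i,j)\<in>{(1,2),(2,2)}. U 1 i * U 2 j * c i j 3)"
    proof (rule amult_restrict)
      fix i j assume a1: "i \<in> {1..n}" "j \<in> {1..n}" "(i, j) \<notin> {(1,2),(2,2)}"
      show "U 1 i * U 2 j * c i j 3 = 0"
      proof (cases "j = 1")
        case True thus ?thesis using U21 by simp
      next
        case False
        hence "3 \<le> max i j" using a1 by auto
        thus ?thesis using inR_zero[OF R a1(1,2), of 3] n3 by auto
      qed
    qed (use n3 in auto)
    also have "\<dots> = U 1 2 * a^2" using c123 c223 U22 by simp
    finally have "U 1 2 * a^2 = 0" using UD[of 1 2 3] L n3 by simp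
    thus ?thesis using a0 by simp
  qed
  have a1: "a = 1"
  proof -
    have "(\<Sum>l=1..n. c 2 1 l * U l 3) = c 2 1 3 * U 3 3"
      by (rule lhs_single[OF R]) (use n3 Ulk in auto)
    also have "\<dots> = a^4" using c213 U33 by simp
    finally have L: "(\<Sum>l=1..n. c 2 1 l * U l 3) = a^4" .
    have "amult n c (U 2) (U 1) 3 = (\<Sum>(i,j)\<in>{(2,1),(2,2)}. U 2 i * U 1 j * c i j 3)"
    proof (rule amult_restrict)
      fix i j assume a1: "i \<in> {1..n}" "j \<in> {1..n}" "(i, j) \<notin> {(2,1),(2,2)}"
      show "U 2 i * U 1 j * c i j 3 = 0"
      proof (cases "i = 1")
        case True thus ?thesis using U21 by simp
      next
        case False
        hence "3 \<le> max i j" using a1 by auto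
        thus ?thesis using inR_zero[OF R a1(1,2), of 3] n3 by auto
      qed
    qed (use n3 in auto)
    also have "\<dots> = a^3" using c213 c223 U22 U12 by (simp add: a_def power2_eq_square power3_eq_cube)
    finally have "a^4 = a^3" using UD[of 2 1 3] L n3 by simp
    hence "a^3 * (a - 1) = 0" by (simp add: algebra_simps power_Suc[symmetric] del: power_Suc)
    thus ?thesis using a0 by simp
  qed
  have Umm: "U m m = 1" if "m \<in> {1..n}" for m using C1[of m] that a1 by simp
  have C4: "\<forall>m. 2 \<le> m \<longrightarrow> m < n \<longrightarrow> U 1 m = 0"
  proof (intro allI)
    fix m show "2 \<le> m \<longrightarrow> m < n \<longrightarrow> U 1 m = 0"
    proof (induction m rule: less_induct)
      case (less m)
      show ?case
      proof (intro impI)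
        assume m: "2 \<le> m" "m < n"
        have c0: "c 1 m (Suc m) = 0" using inR_1i[OF R m] .
        have cmm: "c m m (Suc m) = 1" using inR_sq[OF R, of m] m by simp
        have "(\<Sum>l=1..n. c 1 m l * U l (Suc m)) = c 1 m (Suc m) * U (Suc m) (Suc m)"
          by (rule lhs_single[OF R]) (use m Ulk in auto)
        also have "\<dots> = 0" using c0 by simp
        finally have L: "(\<Sum>l=1..n. c 1 m l * U l (Suc m)) = 0" .
        have "amult n c (U 1) (U m) (Suc m) = (\<Sum>(i,j)\<in>{(1,m),(m,m)}. U 1 i * U m j * c i j (Suc m))"
        proof (rule amult_restrict)
          fix i j assume b1: "i \<in> {1..n}" "j \<in> {1..n}" "(i, j) \<notin> {(1,m),(m,m)}"
          show "U 1 i * U m j * c i j (Suc m) = 0"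
          proof (cases "j < m")
            case True thus ?thesis using Ulk[of j m] m by simp
          next
            case jm: False
            show ?thesis
            proof (cases "Suc m \<le> max i j")
              case True thus ?thesis using inR_zero[OF R b1(1,2), of "Suc m"] m by auto
            next
              case False
              hence "j = m" "2 \<le> i" "i < m" using jm b1 by auto
              thus ?thesis using less.IH m by auto
            qed
          qed
        qed (use m in auto)
        also have "\<dots> = U 1 m" using c0 cmm Umm[of m] m by simp
        finally show "U 1 m = 0" using UD[of 1 m "Suc m"] L m by simp
      qed
    qed
  qed
  define x where "x = U 1 n"
  have U1: "U 1 = (\<lambda>k. basis_vec 1 k + x * basis_vec n k)"
  proof (rule ext)
    fix k show "U 1 k = basis_vec 1 k + x * basis_vec n k"
      using C4 Uv[of 1] n3 a1 by (cases "k = 0 \<or> k > n") (auto simp: vecs_def basis_vec_def a_def x_def)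
  qed
  have C6: "U i = basis_vec i" if "2 \<le> i" "i \<le> n" for i
    using that
  proof (induction i)
    case 0 thus ?case by simp
  next
    case (Suc i)
    have i1: "1 \<le> i" "i < n" using Suc.prems by auto
    have Ui: "\<forall>k<n. U i k = basis_vec i k"
    proof (cases "i = 1")
      case True thus ?thesis using U1 by (simp add: basis_vec_def)
    next
      case False thus ?thesis using Suc.IH Suc.prems by auto
    qed
    have "U (Suc i) = amult n c (U i) (U i)" using UB[OF i1] .
    also have "\<dots> = amult n c (basis_vec i) (basis_vec i)" by (rule amult_cong_n[OF R Ui Ui])
    also have "\<dots> = basis_vec (Suc i)" using sq_basis[OF R i1] .
    finally show ?case .
  qed
  have "\<forall>a\<in>vecs n. f a = (\<lambda>k. a k + x * a 1 * basis_vec n k)"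
  proof
    fix b assume b: "b \<in> vecs n"
    show "f b = (\<lambda>k. b k + x * b 1 * basis_vec n k)"
    proof (rule ext)
      fix k
      have "f b k = (\<Sum>i=1..n. b i * U i k)" using dec[OF b] by simp
      also have "\<dots> = (\<Sum>i=1..n. b i * basis_vec i k + (if i = 1 then x * b 1 * basis_vec n k else 0))"
      proof (rule sum.cong)
        fix i assume "i \<in> {1..n}"
        thus "b i * U i k = b i * basis_vec i k + (if i = 1 then x * b 1 * basis_vec n k else 0)"
          using U1 C6[of i] by (cases "i = 1") (auto simp: algebra_simps)
      qed simp
      also have "\<dots> = (\<Sum>i=1..n. b i * basis_vec i k) + x * b 1 * basis_vec n k"
        using n3 by (simp add: sum.distrib)
      also have "\<dots> = b k + x * b 1 * basis_vec n k" using vec_decomp[OF b] by metis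
      finally show "f b k = b k + x * b 1 * basis_vec n k" .
    qed
  qed
  thus ?thesis by blast
qed


lemma amult_zero_l: "amult n c (\<lambda>_. 0) b = (\<lambda>_. 0)"
  by (rule ext) (simp add: amult_def)

lemma amult_zero_r: "amult n c a (\<lambda>_. 0) = (\<lambda>_. 0)"
  by (rule ext) (simp add: amult_def)

lemma amult_vecs: "amult n c a b \<in> vecs n"
  by (simp add: vecs_def amult_def)

lemma auto_backward:
  assumes n3: "n \<ge> 3" and R: "in_R n c" and hf: "\<forall>a\<in>vecs n. f a = (\<lambda>k. a k + x * a 1 * basis_vec n k)"
  shows "is_automorphism n c f"
proof -
  have bn1: "basis_vec n 1 = 0" using n3 by (simp add: basis_vec_def)
  have f1: "f a 1 = a 1" if "a \<in> vecs n" for a using hf that bn1 by simp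
  have fv: "f a \<in> vecs n" if "a \<in> vecs n" for a
    using hf that by (auto simp: vecs_def basis_vec_def)
  have inj: "inj_on f (vecs n)"
  proof (rule inj_onI)
    fix a b assume a: "a \<in> vecs n" and b: "b \<in> vecs n" and e: "f a = f b"
    have "a 1 = b 1" using f1[OF a] f1[OF b] e by simp
    show "a = b"
    proof
      fix k have "f a k = f b k" using e by simp
      thus "a k = b k" using hf a b \<open>a 1 = b 1\<close> by simp
    qed
  qed
  have surj: "vecs n \<subseteq> f ` vecs n"
  proof
    fix b assume b: "b \<in> vecs n"
    define a where "a = (\<lambda>k. b k - x * b 1 * basis_vec n k)"
    have a: "a \<in> vecs n" using b by (auto simp: a_def vecs_def basis_vec_def)
    have "a 1 = b 1" using bn1 by (simp add: a_def)
    hence "f a = b" using hf a by (auto simp: a_def)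
    thus "b \<in> f ` vecs n" using a by blast
  qed
  have bij: "bij_betw f (vecs n) (vecs n)"
    unfolding bij_betw_def using inj surj fv by blast
  have add: "\<forall>a\<in>vecs n. \<forall>b\<in>vecs n. f (\<lambda>k. a k + b k) = (\<lambda>k. f a k + f b k)"
  proof (intro ballI)
    fix a b assume a: "a \<in> vecs n" and b: "b \<in> vecs n"
    have ab: "(\<lambda>k. a k + b k) \<in> vecs n" using a b by (simp add: vecs_def)
    show "f (\<lambda>k. a k + b k) = (\<lambda>k. f a k + f b k)"
      using hf a b ab by (simp add: algebra_simps)
  qed
  have sc: "\<forall>a\<in>vecs n. \<forall>t. f (\<lambda>k. t * a k) = (\<lambda>k. t * f a k)"
  proof (intro ballI allI)
    fix a t assume a: "a \<in> vecs n"
    have ab: "(\<lambda>k. t * a k) \<in> vecs n" using a by (simp add: vecs_def)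
    show "f (\<lambda>k. t * a k) = (\<lambda>k. t * f a k)"
      using hf a ab by (simp add: algebra_simps)
  qed
  have mul: "\<forall>a\<in>vecs n. \<forall>b\<in>vecs n. f (amult n c a b) = amult n c (f a) (f b)"
  proof (intro ballI)
    fix a b assume a: "a \<in> vecs n" and b: "b \<in> vecs n"
    have a0: "\<forall>i<1. a i = 0" using a by (simp add: vecs_def)
    have b0: "\<forall>i<1. b i = 0" using b by (simp add: vecs_def)
    have m1: "amult n c a b 1 = 0" by (rule amult_low[OF R a0 b0]) simp
    have "f (amult n c a b) = amult n c a b" using hf amult_vecs m1 by simp
    also have "\<dots> = amult n c (f a) (f b)"
      by (rule amult_cong_n[OF R]) (use hf a b in \<open>auto simp: basis_vec_def\<close>)
    finally show "f (amult n c a b) = amult n c (f a) (f b)" .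
  qed
  show ?thesis unfolding is_automorphism_def using bij add sc mul by blast
qed

lemma ann_char:
  assumes n3: "n \<ge> 3" and R: "in_R n c"
  shows "annihilator n c = {(\<lambda>k. t * basis_vec n k) | t. True}"
proof
  show "annihilator n c \<subseteq> {(\<lambda>k. t * basis_vec n k) | t. True}"
  proof
    fix a assume aA: "a \<in> annihilator n c"
    have av: "a \<in> vecs n" using aA by (simp add: annihilator_def)
    have prod0: "amult n c a b = (\<lambda>_. 0)" if "b \<in> vecs n" for b
      using aA that by (simp add: annihilator_def)
    have C: "\<forall>m. 1 \<le> m \<longrightarrow> m < n \<longrightarrow> a m = 0"
    proof (intro allI)
      fix m show "1 \<le> m \<longrightarrow> m < n \<longrightarrow> a m = 0"
      proof (induction m rule: less_induct)
        case (less m)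
        show ?case
        proof (intro impI)
          assume m: "1 \<le> m" "m < n"
          have bm: "basis_vec m \<in> vecs n" using m by (intro basis_in) auto
          have "amult n c a (basis_vec m) (Suc m) = (\<Sum>(i,j)\<in>{(m,m)}. a i * basis_vec m j * c i j (Suc m))"
          proof (rule amult_restrict)
            fix i j assume b1: "i \<in> {1..n}" "j \<in> {1..n}" "(i, j) \<notin> {(m,m)}"
            show "a i * basis_vec m j * c i j (Suc m) = 0"
            proof (cases "j = m")
              case False thus ?thesis by (simp add: basis_vec_def)
            next
              case True
              show ?thesis
              proof (cases "i < m")
                case True thus ?thesis using less.IH b1 m by auto
              next
                case False
                hence "Suc m \<le> max i j" using b1 \<open>j = m\<close> by auto
                thus ?thesis using inR_zero[OF R b1(1,2), of "Suc m"] m by auto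
              qed
            qed
          qed (use m in auto)
          also have "\<dots> = a m" using inR_sq[OF R m] by (simp add: basis_vec_def)
          finally show "a m = 0" using prod0[OF bm] by (metis)
        qed
      qed
    qed
    have "a = (\<lambda>k. a n * basis_vec n k)"
    proof
      fix k show "a k = a n * basis_vec n k"
        using C av by (cases "k = 0 \<or> k > n") (auto simp: vecs_def basis_vec_def)
    qed
    thus "a \<in> {(\<lambda>k. t * basis_vec n k) | t. True}" by blast
  qed
next
  show "{(\<lambda>k. t * basis_vec n k) | t. True} \<subseteq> annihilator n c"
  proof
    fix a assume "a \<in> {(\<lambda>k. t * basis_vec n k) | t. True}"
    then obtain t where t: "a = (\<lambda>k. t * basis_vec n k)" by blast
    have av: "a \<in> vecs n" using t n3 by (auto simp: vecs_def basis_vec_def)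
    have a0: "\<forall>i<n. a i = (\<lambda>_. 0) i" using t by (simp add: basis_vec_def)
    have "amult n c a b = (\<lambda>_. 0) \<and> amult n c b a = (\<lambda>_. 0)" for b
      using amult_cong_n[OF R a0, of b b] amult_cong_n[OF R _ a0, of b b]
      by (simp add: amult_zero_l amult_zero_r)
    thus "a \<in> annihilator n c" using av by (simp add: annihilator_def)
  qed
qed

theorem mainTheorem11:
  fixes n :: nat and c :: sconst
  assumes "n \<ge> 3" and "in_R n c"
  shows "annihilator n c = {(\<lambda>k. t * basis_vec n k) | t. True}
       \<and> (\<forall>f. is_automorphism n c f \<longleftrightarrow>
              (\<exists>x::complex. \<forall>a\<in>vecs n. f a = (\<lambda>k. a k + x * a 1 * basis_vec n k)))"
  using ann_char[OF assms] auto_forward[OF assms] auto_backward[OF assms] by blast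

end
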